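(* Let $N\ge 2$ be an integer. Let $G$ be a finite, simple, bipartite graph with adjacency matrix $A$ such that (i) every vertex of $G$ has degree $N-1$, and (ii) for every edge $\{p,q\}$ of $G$, $(A^{3})_{pq}=\frac{(N-1)^{3}+1}{N}$ and $(A^{5})_{pq}=\frac{(N-1)^{5}+1}{N}$. Then for any two distinct vertices $p\neq q$ of $G$, $(A^2)_{pq}\le N-2$.
   Context: $(A^2)_{pq}$ is the number of walks of length 2 from $p$ to $q$. *)

theory Defs
  imports "HOL-Analysis.Analysis"
begin

definition simple_graph :: "('v \<Rightarrow> 'v \<Rightarrow> bool) \<Rightarrow> bool" where
  "simple_graph E \<longleftrightarrow> (\<forall>p q. E p q \<longrightarrow> E q p) \<and> (\<forall>p. \<not> E p p)"

definition bipartite :: "('v \<Rightarrow> 'v \<Rightarrow> bool) \<Rightarrow> bool" where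
  "bipartite E \<longleftrightarrow> (\<exists>X. \<forall>p q. E p q \<longrightarrow> (p \<in> X \<longleftrightarrow> q \<notin> X))"

definition degree :: "('v \<Rightarrow> 'v \<Rightarrow> bool) \<Rightarrow> 'v \<Rightarrow> nat" where
  "degree E p = card {q. E p q}"

definition adj_matrix :: "('v::finite \<Rightarrow> 'v \<Rightarrow> bool) \<Rightarrow> real^'v^'v" where
  "adj_matrix E = (\<chi> p q. if E p q then 1 else 0)"

primrec mat_power :: "real^'n::finite^'n \<Rightarrow> nat \<Rightarrow> real^'n^'n" where
  "mat_power A 0 = mat 1"
| "mat_power A (Suc k) = A ** mat_power A k"

end

theory Submission
  imports Defs
begin

lemma mm_entry: "(X ** Y) $ i $ j = (\<Sum>k\<in>UNIV. X $ i $ k * Y $ k $ j)"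
  by (simp add: matrix_matrix_mult_def)

lemma mp_add: "mat_power A (m + n) = mat_power A m ** mat_power A n"
  by (induction m) (simp_all add: matrix_mul_assoc)

lemma mp_Suc': "mat_power A (Suc k) = mat_power A k ** A"
proof -
  have "mat_power A (k + 1) = mat_power A k ** mat_power A 1" by (rule mp_add)
  then show ?thesis by simp
qed

lemma mp_sym:
  assumes "\<And>i j. A $ i $ j = A $ j $ i"
  shows "mat_power A k $ i $ j = mat_power A k $ j $ i"
proof (induction k arbitrary: i j)
  case 0 then show ?case by (simp add: mat_def)
next
  case (Suc k)
  have "mat_power A (Suc k) $ j $ i = (\<Sum>m\<in>UNIV. mat_power A k $ j $ m * A $ m $ i)"
    by (simp only: mp_Suc' mm_entry)
  also have "\<dots> = (\<Sum>m\<in>UNIV. A $ i $ m * mat_power A k $ m $ j)"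
    using Suc assms by (simp add: mult.commute)
  also have "\<dots> = mat_power A (Suc k) $ i $ j" by (simp add: mm_entry)
  finally show ?case by simp
qed

lemma mp_nonneg:
  assumes "\<And>i j. A $ i $ j \<ge> 0"
  shows "mat_power A k $ i $ j \<ge> 0"
proof (induction k arbitrary: i j)
  case 0 then show ?case by (simp add: mat_def)
next
  case (Suc k) then show ?case by (simp add: mm_entry assms sum_nonneg)
qed

lemma mp_rowsum:
  assumes "\<And>i. (\<Sum>j\<in>UNIV. A $ i $ j) = d"
  shows "(\<Sum>j\<in>UNIV. mat_power A k $ i $ j) = d ^ k"
proof (induction k arbitrary: i)
  case 0 then show ?case by (simp add: mat_def)
next
  case (Suc k)
  have "(\<Sum>j\<in>UNIV. mat_power A (Suc k) $ i $ j)
      = (\<Sum>j\<in>UNIV. \<Sum>m\<in>UNIV. A $ i $ m * mat_power A k $ m $ j)" by (simp add: mm_entry)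
  also have "\<dots> = (\<Sum>m\<in>UNIV. A $ i $ m * (\<Sum>j\<in>UNIV. mat_power A k $ m $ j))"
    by (subst sum.swap) (simp add: sum_distrib_left)
  also have "\<dots> = (\<Sum>m\<in>UNIV. A $ i $ m) * d ^ k" using Suc by (simp add: sum_distrib_right)
  finally show ?case using assms by simp
qed

theorem lemma4:
  fixes E :: "'v::finite \<Rightarrow> 'v \<Rightarrow> bool" and N :: nat
  assumes "N \<ge> 2"
    and "simple_graph E"
    and "bipartite E"
    and "\<And>p. degree E p = N - 1"
    and "\<And>p q. E p q \<Longrightarrow>
           mat_power (adj_matrix E) 3 $ p $ q = ((real N - 1) ^ 3 + 1) / real N"
    and "\<And>p q. E p q \<Longrightarrow>
           mat_power (adj_matrix E) 5 $ p $ q = ((real N - 1) ^ 5 + 1) / real N"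
    and "p \<noteq> q"
  shows "mat_power (adj_matrix E) 2 $ p $ q \<le> real N - 2"
proof -
  define A where "A = adj_matrix E"
  define P where "P = mat_power A"
  define d where "d = real N - 1"
  have d1: "d \<ge> 1" using assms(1) by (simp add: d_def)
  have Nd: "real N = d + 1" by (simp add: d_def)
  have symE: "\<And>a b. E a b \<Longrightarrow> E b a" and irr: "\<And>a. \<not> E a a"
    using assms(2) by (auto simp: simple_graph_def)
  have Aent: "\<And>i j. A $ i $ j = (if E i j then 1 else 0)" by (simp add: A_def adj_matrix_def)
  have Asym: "\<And>i j. A $ i $ j = A $ j $ i" using symE by (auto simp: Aent)
  have Anonneg: "\<And>i j. A $ i $ j \<ge> 0" by (simp add: Aent)
  have cardN: "\<And>i. real (card {j. E i j}) = d"
    using assms(4) assms(1) by (simp add: degree_def d_def of_nat_diff)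
  have rowA: "\<And>i. (\<Sum>j\<in>UNIV. A $ i $ j) = d"
  proof -
    fix i
    have "(\<Sum>j\<in>UNIV. A $ i $ j) = (\<Sum>j\<in>{j. E i j}. 1)"
      by (simp add: Aent sum.If_cases)
    then show "(\<Sum>j\<in>UNIV. A $ i $ j) = d" using cardN by simp
  qed
  have Psym: "\<And>k i j. P k $ i $ j = P k $ j $ i" unfolding P_def by (rule mp_sym[OF Asym])
  have Pnn: "\<And>k i j. P k $ i $ j \<ge> 0" unfolding P_def by (rule mp_nonneg[OF Anonneg])
  have Prow: "\<And>k i. (\<Sum>j\<in>UNIV. P k $ i $ j) = d ^ k" unfolding P_def by (rule mp_rowsum[OF rowA])
  define c3 where "c3 = d^2 - d + 1"
  define c5 where "c5 = d^4 - d^3 + d^2 - d + 1"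
  have e3: "((real N - 1) ^ 3 + 1) / real N = c3"
    using d1 by (simp add: Nd c3_def field_simps) (simp add: algebra_simps power2_eq_square power3_eq_cube)
  have e5: "((real N - 1) ^ 5 + 1) / real N = c5"
    using d1 by (simp add: Nd c5_def field_simps) (simp add: algebra_simps power2_eq_square power3_eq_cube power_numeral_reduce)
  have P3: "\<And>a b. E a b \<Longrightarrow> P 3 $ a $ b = c3" using assms(5) e3 by (simp add: P_def A_def)
  have P5: "\<And>a b. E a b \<Longrightarrow> P 5 $ a $ b = c5" using assms(6) e5 by (simp add: P_def A_def)
  define y where "y s = P 2 $ p $ s" for s
  define x where "x t = P 3 $ p $ t" for t
  have ynn: "\<And>s. y s \<ge> 0" and xnn: "\<And>t. x t \<ge> 0" by (simp_all add: y_def x_def Pnn)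
  have P1: "P 1 = A" by (simp add: P_def)
  have nbsum: "\<And>f. (\<Sum>t\<in>UNIV. A $ p $ t * f t) = (\<Sum>t\<in>{t. E p t}. f t)"
  proof -
    fix f :: "'v \<Rightarrow> real"
    have "\<And>t. A $ p $ t * f t = (if E p t then f t else 0)" by (simp add: Aent)
    then show "(\<Sum>t\<in>UNIV. A $ p $ t * f t) = (\<Sum>t\<in>{t. E p t}. f t)"
      by (simp add: sum.If_cases)
  qed
  have yp: "y p = d"
  proof -
    have "y p = (\<Sum>k\<in>UNIV. A $ p $ k * A $ k $ p)"
      by (simp add: y_def P_def numeral_2_eq_2 mm_entry)
    also have "\<dots> = (\<Sum>k\<in>UNIV. A $ p $ k)"
      by (rule sum.cong) (auto simp: Aent dest: symE)
    finally show ?thesis using rowA by simp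
  qed
  have ysq: "(\<Sum>s\<in>UNIV. (y s)^2) = d * c3"
  proof -
    have "P 4 = P 2 ** P 2" using mp_add[of A 2 2] by (simp add: P_def)
    then have "P 4 $ p $ p = (\<Sum>s\<in>UNIV. (y s)^2)"
      by (simp add: mm_entry y_def power2_eq_square Psym[of 2 _ p])
    moreover have "P 4 $ p $ p = (\<Sum>t\<in>UNIV. A $ p $ t * P 3 $ t $ p)"
      by (simp add: P_def numeral_eq_Suc mm_entry)
    moreover have "\<dots> = (\<Sum>t\<in>{t. E p t}. c3)" by (simp add: nbsum P3 symE)
    ultimately show ?thesis using cardN by simp
  qed
  have xsq: "(\<Sum>t\<in>UNIV. (x t)^2) = d * c5"
  proof -
    have "P 6 = P 3 ** P 3" using mp_add[of A 3 3] by (simp add: P_def)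
    then have "P 6 $ p $ p = (\<Sum>s\<in>UNIV. (x s)^2)"
      by (simp add: mm_entry x_def power2_eq_square Psym[of 3 _ p])
    moreover have "P 6 $ p $ p = (\<Sum>t\<in>UNIV. A $ p $ t * P 5 $ t $ p)"
      by (simp add: P_def numeral_eq_Suc mm_entry)
    moreover have "\<dots> = (\<Sum>t\<in>{t. E p t}. c5)" by (simp add: nbsum P5 symE)
    ultimately show ?thesis using cardN by simp
  qed
  have xy: "\<And>t. x t = (\<Sum>s\<in>UNIV. y s * A $ s $ t)"
  proof -
    fix t
    have "P (Suc 2) = P 2 ** A" by (simp only: P_def mp_Suc')
    then show "x t = (\<Sum>s\<in>UNIV. y s * A $ s $ t)"
      by (simp add: x_def y_def mm_entry numeral_3_eq_3)
  qed
  have ysum: "(\<Sum>s\<in>UNIV. y s) = d^2" using Prow by (simp add: y_def)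
  have xsum: "(\<Sum>t\<in>UNIV. x t) = d^3" using Prow by (simp add: x_def)
  define T where "T = {t. \<not> E p t}"
  define S where "S = d^2 - d"
  have splitU: "\<And>f::'v\<Rightarrow>real. (\<Sum>t\<in>UNIV. f t) = (\<Sum>t\<in>{t. E p t}. f t) + (\<Sum>t\<in>T. f t)"
  proof -
    fix f :: "'v \<Rightarrow> real"
    have "UNIV = {t. E p t} \<union> T" by (auto simp: T_def)
    then show "(\<Sum>t\<in>UNIV. f t) = (\<Sum>t\<in>{t. E p t}. f t) + (\<Sum>t\<in>T. f t)"
      by (metis (no_types, lifting) T_def disjoint_iff finite mem_Collect_eq sum.union_disjoint)
  qed
  have xT: "(\<Sum>t\<in>T. x t) = S"
  proof -
    have "(\<Sum>t\<in>{t. E p t}. x t) = d * c3" using cardN by (simp add: x_def P3)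
    then show ?thesis using splitU[of x] xsum by (simp add: S_def c3_def algebra_simps power2_eq_square power3_eq_cube)
  qed
  have x2T: "(\<Sum>t\<in>T. (x t)^2) = S^2"
  proof -
    have "(\<Sum>t\<in>{t. E p t}. (x t)^2) = d * c3^2" using cardN by (simp add: x_def P3)
    then show ?thesis using splitU[of "\<lambda>t. (x t)^2"] xsq
      by (simp add: S_def c3_def c5_def algebra_simps power2_eq_square power3_eq_cube power_numeral_reduce)
  qed
  define R where "R = UNIV - {p}"
  have yR: "(\<Sum>s\<in>R. y s) = S"
    using ysum yp by (simp add: R_def sum_diff1 S_def)
  have y2R: "(\<Sum>s\<in>R. (y s)^2) = d * (d - 1)^2"
    using ysq yp by (simp add: R_def sum_diff1 c3_def algebra_simps power2_eq_square)
  have qR: "q \<in> R" using assms(7) by (simp add: R_def)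
  have "y q \<le> d - 1"
  proof (cases "d = 1")
    case True
    then have "S = 0" by (simp add: S_def)
    then have "y q = 0" using yR qR ynn sum_nonneg_eq_0_iff[of R y] by auto
    then show ?thesis using True by simp
  next
    case False
    then have Spos: "S > 0" using d1 by (simp add: S_def power2_eq_square)
    obtain t where tT: "t \<in> T" and xt: "x t \<ge> S"
    proof (rule ccontr)
      assume "\<not> thesis"
      with that have lt: "\<And>t. t \<in> T \<Longrightarrow> x t < S" by force
      have "(\<Sum>t\<in>T. x t * (S - x t)) = S * (\<Sum>t\<in>T. x t) - (\<Sum>t\<in>T. (x t)^2)"
        by (simp add: algebra_simps sum_subtractf sum_distrib_left power2_eq_square)
      also have "\<dots> = 0" using xT x2T by (simp add: power2_eq_square)
      moreover have "\<forall>t\<in>T. x t * (S - x t) \<ge> 0" using lt xnn by (simp add: less_imp_le)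
      ultimately have "\<forall>t\<in>T. x t * (S - x t) = 0"
        using sum_nonneg_eq_0_iff[of T "\<lambda>t. x t * (S - x t)"] by auto
      then have "\<forall>t\<in>T. x t = 0" using lt by auto
      then have "(\<Sum>t\<in>T. x t) = 0" by simp
      then show False using xT Spos by simp
    qed
    define Nt where "Nt = {s. E s t}"
    have pNt: "p \<notin> Nt" using tT symE by (auto simp: Nt_def T_def)
    have NtR: "Nt \<subseteq> R" using pNt by (auto simp: R_def)
    have cNt: "real (card Nt) = d"
    proof -
      have "Nt = {s. E t s}" using symE by (auto simp: Nt_def)
      then show ?thesis using cardN by simp
    qed
    have xtN: "x t = (\<Sum>s\<in>Nt. y s)"
    proof -
      have "\<And>s. y s * A $ s $ t = (if E s t then y s else 0)" by (simp add: Aent)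
      then show ?thesis by (simp add: xy Nt_def sum.If_cases)
    qed
    have split2: "\<And>f::'v\<Rightarrow>real. (\<Sum>s\<in>R. f s) = (\<Sum>s\<in>Nt. f s) + (\<Sum>s\<in>R - Nt. f s)"
      using NtR by (metis finite sum.subset_diff add.commute)
    have r0: "(\<Sum>s\<in>R - Nt. y s) \<le> 0" using split2[of y] yR xtN xt by simp
    then have yout: "\<forall>s\<in>R - Nt. y s = 0"
      using sum_nonneg_eq_0_iff[of "R - Nt" y] ynn by (meson finite order_antisym sum_nonneg)
    have yNt: "(\<Sum>s\<in>Nt. y s) = S" using split2[of y] yR yout by simp
    have y2Nt: "(\<Sum>s\<in>Nt. (y s)^2) = d * (d - 1)^2" using split2[of "\<lambda>s. (y s)^2"] y2R yout by simp
    have "(\<Sum>s\<in>Nt. (y s - (d - 1))^2)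
        = (\<Sum>s\<in>Nt. (y s)^2) - 2 * (d - 1) * (\<Sum>s\<in>Nt. y s) + real (card Nt) * (d - 1)^2"
      by (simp add: power2_diff sum.distrib sum_subtractf sum_distrib_left) (simp add: algebra_simps)
    also have "\<dots> = 0" unfolding y2Nt yNt cNt S_def by (simp add: algebra_simps power2_eq_square)
    finally have "\<forall>s\<in>Nt. (y s - (d - 1))^2 = 0"
      using sum_nonneg_eq_0_iff[of Nt "\<lambda>s. (y s - (d - 1))^2"] by auto
    then have yNt': "\<forall>s\<in>Nt. y s = d - 1" by auto
    show ?thesis
    proof (cases "q \<in> Nt")
      case True then show ?thesis using yNt' by simp
    next
      case False then show ?thesis using yout qR d1 by auto
    qed
  qed
  then show ?thesis by (simp add: y_def P_def A_def d_def)
qed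

end
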